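(* For every integer $n\ge 4$, in the Maker–Breaker transversal game on an $n\times n$ grid, the first player (Maker) has a winning strategy; moreover Maker can win with a strategy whose first move is the top-left cell $(1,1)$.
   Context: A transversal of an $n\times n$ grid is a set of $n$ cells no two of which lie in the same row or the same column. Cell $(a,b)$ denotes the cell in row $a$ (counted from the top) and column $b$ (counted from the left). In the Maker–Breaker transversal game on an $n\times n$ grid, two players alternately claim unoccupied cells, Maker moving first. Maker wins if at some point he has claimed all $n$ cells of some transversal; otherwise (in particular if the grid is filled without this happening) Breaker wins. Breaker claiming a transversal has no effect. *)

theory Defs
  imports Main
begin

definition grid :: "nat \<Rightarrow> (nat \<times> nat) set" where
  "grid n = {1..n} \<times> {1..n}"

definition is_transversal :: "nat \<Rightarrow> (nat \<times> nat) set \<Rightarrow> bool" where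
  "is_transversal n T \<longleftrightarrow> T \<subseteq> grid n \<and> card T = n \<and> inj_on fst T \<and> inj_on snd T"

definition has_transversal :: "nat \<Rightarrow> (nat \<times> nat) set \<Rightarrow> bool" where
  "has_transversal n M \<longleftrightarrow> (\<exists>T. T \<subseteq> M \<and> is_transversal n T)"

text \<open>maker_wins n M B: in the position where Maker owns M, Breaker owns B and it is
  Maker's turn, Maker has a winning strategy. Maker wins as soon as his cells contain a
  transversal; if the board fills up first, Breaker wins. (The game is finite, so the
  least fixed point characterises exactly the positions with a winning strategy.)\<close>
inductive maker_wins :: "nat \<Rightarrow> (nat \<times> nat) set \<Rightarrow> (nat \<times> nat) set \<Rightarrow> bool"
  for n :: nat where
  win_now: "\<lbrakk> c \<in> grid n - M - B; has_transversal n (insert c M) \<rbrakk> \<Longrightarrow> maker_wins n M B"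
| win_later: "\<lbrakk> c \<in> grid n - M - B; grid n - insert c M - B \<noteq> {};
     \<forall>d \<in> grid n - insert c M - B. maker_wins n (insert c M) (insert d B) \<rbrakk>
     \<Longrightarrow> maker_wins n M B"

definition maker_wins_with_move :: "nat \<Rightarrow> (nat \<times> nat) set \<Rightarrow> (nat \<times> nat) set \<Rightarrow> nat \<times> nat \<Rightarrow> bool" where
  "maker_wins_with_move n M B c \<longleftrightarrow> c \<in> grid n - M - B \<and>
     (has_transversal n (insert c M) \<or>
      (grid n - insert c M - B \<noteq> {} \<and>
       (\<forall>d \<in> grid n - insert c M - B. maker_wins n (insert c M) (insert d B))))"

end

theory Submission
  imports Defs
begin


lemma ht_mono: "has_transversal n A \<Longrightarrow> A \<subseteq> A' \<Longrightarrow> has_transversal n A'"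
  unfolding has_transversal_def by blast

lemma finite_grid: "finite (grid n)" unfolding grid_def by simp

lemma card2_minus: "card q = 2 \<Longrightarrow> q - {d} \<noteq> {}"
proof
  assume c: "card q = 2" and e: "q - {d} = {}"
  then have "q \<subseteq> {d}" by auto
  then have "card q \<le> card {d}" by (rule card_mono[rotated]) simp
  then show False using c by simp
qed

lemma card2_single: "card q = 2 \<Longrightarrow> card (q - {d}) = 1 \<Longrightarrow> d \<in> q"
  by (cases "d \<in> q") auto

lemma pairing:
  assumes "\<forall>q\<in>P. q \<subseteq> grid n - M - B \<and> q \<noteq> {} \<and> card q \<le> 2"
    and "\<forall>q1\<in>P. \<forall>q2\<in>P. q1 \<noteq> q2 \<longrightarrow> q1 \<inter> q2 = {}"
    and "\<forall>q1\<in>P. \<forall>q2\<in>P. card q1 = 1 \<longrightarrow> card q2 = 1 \<longrightarrow> q1 = q2"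
    and "\<forall>S. (\<forall>q\<in>P. q \<inter> S \<noteq> {}) \<longrightarrow> has_transversal n (M \<union> S)"
    and "grid n - M - B \<noteq> {}"
  shows "maker_wins n M B"
  using assms
proof (induction "card (grid n - M - B)" arbitrary: M B P rule: less_induct)
  case less
  note blk = less.prems(1) and dis = less.prems(2) and sing = less.prems(3)
    and hit = less.prems(4) and ne = less.prems(5)
  show ?case
  proof (cases "P = {}")
    case True
    have h0: "has_transversal n (M \<union> {})" using hit True by blast
    obtain c where c: "c \<in> grid n - M - B" using ne by blast
    have "has_transversal n (insert c M)" by (rule ht_mono[OF h0]) auto
    then show ?thesis by (rule maker_wins.win_now[OF c])
  next
    case False
    define p where "p = (if \<exists>q\<in>P. card q = 1 then SOME q. q \<in> P \<and> card q = 1 else SOME q. q \<in> P)"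
    have pP: "p \<in> P"
    proof (cases "\<exists>q\<in>P. card q = 1")
      case True
      then have "\<exists>q. q \<in> P \<and> card q = 1" by blast
      from someI_ex[OF this] True show ?thesis unfolding p_def by simp
    next
      case F: False
      have "\<exists>q. q \<in> P" using False by blast
      from someI_ex[OF this] F show ?thesis unfolding p_def by simp
    qed
    have P1c: "card q = 2" if "q \<in> P - {p}" for q
    proof -
      have q: "q \<in> P" "q \<noteq> p" using that by auto
      have "card q \<noteq> 1"
      proof
        assume c1: "card q = 1"
        then have ex: "\<exists>q\<in>P. card q = 1" using q by blast
        then have "p \<in> P \<and> card p = 1" unfolding p_def
          using someI_ex[where P="\<lambda>q. q \<in> P \<and> card q = 1"] by auto
        then show False using sing q c1 by blast
      qed
      moreover have "finite q" using blk q finite_grid by (meson finite_Diff finite_subset)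
      moreover have "card q \<noteq> 0" using blk q \<open>finite q\<close> by simp
      moreover have "card q \<le> 2" using blk q by blast
      ultimately show ?thesis by linarith
    qed
    obtain x where xp: "x \<in> p" using blk pP by blast
    have xfree: "x \<in> grid n - M - B" using blk pP xp by blast
    show ?thesis
    proof (cases "P - {p} = {}")
      case True
      have "\<forall>q\<in>P. q \<inter> {x} \<noteq> {}" using True xp by auto
      then have "has_transversal n (M \<union> {x})" using hit by blast
      then have "has_transversal n (insert x M)" by simp
      then show ?thesis by (rule maker_wins.win_now[OF xfree])
    next
      case P1ne: False
      then obtain q0 where q0: "q0 \<in> P - {p}" by blast
      have xq: "x \<notin> q" if "q \<in> P - {p}" for q using dis that pP xp by blast
      show ?thesis
      proof (rule maker_wins.win_later[OF xfree])
        show "grid n - insert x M - B \<noteq> {}"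
        proof -
          have q0c: "card q0 = 2" using P1c q0 by blast
          obtain y where "y \<in> q0" using card2_minus[OF q0c] by blast
          then have "y \<in> grid n - insert x M - B" using q0 xq[OF q0] blk by blast
          then show ?thesis by blast
        qed
        show "\<forall>d\<in>grid n - insert x M - B. maker_wins n (insert x M) (insert d B)"
        proof
          fix d assume d: "d \<in> grid n - insert x M - B"
          define P' where "P' = (\<lambda>q. q - {d}) ` (P - {p})"
          have lt: "card (grid n - insert x M - insert d B) < card (grid n - M - B)"
          proof -
            have "grid n - insert x M - insert d B \<subset> grid n - M - B" using d xfree by auto
            then show ?thesis by (meson finite_grid finite_Diff psubset_card_mono)
          qed
          show "maker_wins n (insert x M) (insert d B)"
          proof (rule less.hyps[OF lt, of P'])
            show "\<forall>q\<in>P'. q \<subseteq> grid n - insert x M - insert d B \<and> q \<noteq> {} \<and> card q \<le> 2"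
            proof
              fix q' assume "q' \<in> P'"
              then obtain q where q: "q \<in> P - {p}" and q': "q' = q - {d}" unfolding P'_def by blast
              have c2: "card q = 2" using P1c q by blast
              have "q' \<noteq> {}" using card2_minus[OF c2] q' by simp
              moreover have "card q' \<le> 2" using c2 q' card_Diff1_le[of q d] by simp
              moreover have "q' \<subseteq> grid n - insert x M - insert d B" using q q' blk xq by blast
              ultimately show "q' \<subseteq> grid n - insert x M - insert d B \<and> q' \<noteq> {} \<and> card q' \<le> 2" by blast
            qed
            show "\<forall>q1\<in>P'. \<forall>q2\<in>P'. q1 \<noteq> q2 \<longrightarrow> q1 \<inter> q2 = {}"
            proof (intro ballI impI)
              fix q1' q2' assume a: "q1' \<in> P'" "q2' \<in> P'" "q1' \<noteq> q2'"
              obtain q1 where q1: "q1 \<in> P - {p}" "q1' = q1 - {d}" using a unfolding P'_def by blast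
              obtain q2 where q2: "q2 \<in> P - {p}" "q2' = q2 - {d}" using a unfolding P'_def by blast
              have "q1 \<noteq> q2" using a(3) q1(2) q2(2) by auto
              then have "q1 \<inter> q2 = {}" using dis q1(1) q2(1) by blast
              then show "q1' \<inter> q2' = {}" using q1(2) q2(2) by auto
            qed
            show "\<forall>q1\<in>P'. \<forall>q2\<in>P'. card q1 = 1 \<longrightarrow> card q2 = 1 \<longrightarrow> q1 = q2"
            proof (intro ballI impI)
              fix q1' q2' assume a: "q1' \<in> P'" "q2' \<in> P'" "card q1' = 1" "card q2' = 1"
              obtain q1 where q1: "q1 \<in> P - {p}" "q1' = q1 - {d}" using a unfolding P'_def by blast
              obtain q2 where q2: "q2 \<in> P - {p}" "q2' = q2 - {d}" using a unfolding P'_def by blast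
              have "card (q1 - {d}) = 1" using a(3) q1(2) by simp
              then have d1: "d \<in> q1" by (rule card2_single[OF P1c[OF q1(1)]])
              have "card (q2 - {d}) = 1" using a(4) q2(2) by simp
              then have d2: "d \<in> q2" by (rule card2_single[OF P1c[OF q2(1)]])
              have "q1 = q2"
              proof (rule ccontr)
                assume "q1 \<noteq> q2"
                then have "q1 \<inter> q2 = {}" using dis q1(1) q2(1) by blast
                then show False using d1 d2 by blast
              qed
              then show "q1' = q2'" using q1 q2 by simp
            qed
            show "\<forall>S. (\<forall>q\<in>P'. q \<inter> S \<noteq> {}) \<longrightarrow> has_transversal n (insert x M \<union> S)"
            proof (intro allI impI)
              fix S assume h: "\<forall>q\<in>P'. q \<inter> S \<noteq> {}"
              have "\<forall>q\<in>P. q \<inter> insert x S \<noteq> {}"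
              proof
                fix q assume "q \<in> P"
                show "q \<inter> insert x S \<noteq> {}"
                proof (cases "q = p")
                  case True then show ?thesis using xp by auto
                next
                  case False
                  then have "q - {d} \<in> P'" unfolding P'_def using \<open>q \<in> P\<close> by blast
                  then have "(q - {d}) \<inter> S \<noteq> {}" by (rule bspec[OF h])
                  then show ?thesis by blast
                qed
              qed
              then have "has_transversal n (M \<union> insert x S)" using hit by blast
              then show "has_transversal n (insert x M \<union> S)" by simp
            qed
            show "grid n - insert x M - insert d B \<noteq> {}"
            proof -
              have q0c: "card q0 = 2" using P1c q0 by blast
              have "q0 - {d} \<noteq> {}" by (rule card2_minus[OF q0c])
              then obtain y where y: "y \<in> q0" "y \<noteq> d" by blast
              have q0s: "q0 \<subseteq> grid n - M - B" using blk q0 by blast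
              have "y \<noteq> x" using xq[OF q0] y(1) by blast
              then have "y \<in> grid n - insert x M - insert d B" using q0s y by blast
              then show ?thesis by blast
            qed
          qed
        qed
      qed
    qed
  qed
qed



definition succm :: "nat \<Rightarrow> nat \<Rightarrow> nat" where "succm m k = (if Suc k = m then 0 else Suc k)"
definition predm :: "nat \<Rightarrow> nat \<Rightarrow> nat" where "predm m k = (if k = 0 then m - 1 else k - 1)"

lemma cycle_fix:
  fixes g :: "nat \<Rightarrow> bool \<Rightarrow> bool"
  assumes k0: "k0 < m" and const: "\<forall>a b. g k0 a = g k0 b"
  shows "\<exists>y. \<forall>k<m. y (predm m k) = g k (y k)"
proof -
  define T where "T k = (if k < k0 then k0 - 1 - k else k0 + m - 1 - k)" for k
  define Z where "Z = rec_nat (g k0 False) (\<lambda>t z. g (T t) z)"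
  define y where "y k = Z (T k)" for k
  have TT: "T (T k) = k" if "k < m" for k using that k0 unfolding T_def by auto
  have Tp: "T (predm m k) = Suc (T k)" if "k < m" "k \<noteq> k0" for k
    using that k0 unfolding T_def predm_def by auto
  have Tp0: "T (predm m k0) = 0" using k0 unfolding T_def predm_def by auto
  have "\<forall>k<m. y (predm m k) = g k (y k)"
  proof (intro allI impI)
    fix k assume k: "k < m"
    show "y (predm m k) = g k (y k)"
    proof (cases "k = k0")
      case True
      then show ?thesis unfolding y_def using Tp0 const by (simp add: Z_def)
    next
      case False
      then show ?thesis unfolding y_def using Tp[OF k False] TT[OF k] by (simp add: Z_def)
    qed
  qed
  then show ?thesis by blast
qed

lemma succm_lt: "k < m \<Longrightarrow> succm m k < m" unfolding succm_def by auto
lemma succm_inj: "k < m \<Longrightarrow> k' < m \<Longrightarrow> succm m k = succm m k' \<Longrightarrow> k = k'"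
  unfolding succm_def by (auto split: if_splits)
lemma pred_succm: "k < m \<Longrightarrow> predm m (succm m k) = k" unfolding succm_def predm_def by auto
lemma succm_neq: "2 \<le> m \<Longrightarrow> k < m \<Longrightarrow> succm m k \<noteq> k" unfolding succm_def by auto

lemma core:
  fixes X Pp :: "nat \<Rightarrow> bool \<Rightarrow> bool"
  assumes m: "2 \<le> m"
  shows "\<exists>\<tau>. inj_on \<tau> ({..<m} \<times> UNIV) \<and> (\<forall>k<m. \<forall>b. fst (\<tau> (k,b)) < m \<and>
     (\<tau> (k,b) = (k, X k b) \<or> (fst (\<tau> (k,b)) = succm m k \<and> Pp k (snd (\<tau> (k,b))) = b)))"
proof (cases "\<forall>k<m. X k True \<noteq> X k False")
  case True
  define \<tau> where "\<tau> = (\<lambda>(k::nat,b). (k, X k b))"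
  have "inj_on \<tau> ({..<m} \<times> UNIV)"
  proof (rule inj_onI)
    fix u v assume u: "u \<in> {..<m} \<times> (UNIV::bool set)" and v: "v \<in> {..<m} \<times> (UNIV::bool set)" and e: "\<tau> u = \<tau> v"
    obtain k b where kb: "u = (k,b)" by (cases u)
    obtain k' b' where kb': "v = (k',b')" by (cases v)
    have "k = k'" "X k b = X k b'" using e kb kb' by (auto simp: \<tau>_def)
    moreover have "k < m" using u kb by auto
    ultimately show "u = v" using True kb kb' by (cases b; cases b'; auto)
  qed
  then show ?thesis by (intro exI[of _ \<tau>]) (auto simp: \<tau>_def)
next
  case False
  then obtain k0 where k0: "k0 < m" "X k0 True = X k0 False" by blast
  define g where "g k z = (\<not> X k (\<not> Pp k z))" for k z
  have "\<forall>a b. g k0 a = g k0 b" unfolding g_def using k0 by (metis (full_types))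
  then obtain y where y: "\<forall>k<m. y (predm m k) = g k (y k)" using cycle_fix[OF k0(1)] by blast
  define \<tau> where "\<tau> = (\<lambda>(k::nat,b). if b = Pp k (y k) then (succm m k, y k) else (k, X k b))"
  have "inj_on \<tau> ({..<m} \<times> UNIV)"
  proof (rule inj_onI)
    fix u v assume u: "u \<in> {..<m} \<times> (UNIV::bool set)" and v: "v \<in> {..<m} \<times> (UNIV::bool set)" and e: "\<tau> u = \<tau> v"
    obtain k b where kb: "u = (k,b)" by (cases u)
    obtain k' b' where kb': "v = (k',b')" by (cases v)
    have km: "k < m" "k' < m" using u v kb kb' by auto
    have off_diag: False if "b = Pp k (y k)" "b' \<noteq> Pp k' (y k')" "succm m k = k'" "y k = X k' b'" "k < m" "k' < m" for k b k' b'
    proof -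
      have p: "predm m k' = k" using pred_succm[OF that(5)] that(3) by simp
      have "y (predm m k') = g k' (y k')" using y that(6) by simp
      then have "y k = g k' (y k')" using p by simp
      moreover have "b' = (\<not> Pp k' (y k'))" using that(2) by blast
      ultimately have "y k = (\<not> X k' b')" unfolding g_def by simp
      then show False using that(4) by simp
    qed
    show "u = v"
    proof (cases "b = Pp k (y k)"; cases "b' = Pp k' (y k')")
      assume a: "b = Pp k (y k)" "b' = Pp k' (y k')"
      then have "succm m k = succm m k'" using e kb kb' by (simp add: \<tau>_def)
      then have "k = k'" using succm_inj km by blast
      then show ?thesis using a kb kb' by simp
    next
      assume a: "b = Pp k (y k)" "b' \<noteq> Pp k' (y k')"
      then have "succm m k = k'" "y k = X k' b'" using e kb kb' by (auto simp: \<tau>_def)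
      then show ?thesis using off_diag[OF a] km by blast
    next
      assume a: "b \<noteq> Pp k (y k)" "b' = Pp k' (y k')"
      then have "succm m k' = k" "y k' = X k b" using e kb kb' by (auto simp: \<tau>_def)
      then show ?thesis using off_diag[OF a(2) a(1)] km by blast
    next
      assume a: "b \<noteq> Pp k (y k)" "b' \<noteq> Pp k' (y k')"
      then have "k = k'" using e kb kb' by (auto simp: \<tau>_def)
      then show ?thesis using a kb kb' by (cases b; cases b'; auto)
    qed
  qed
  moreover have "\<forall>k<m. \<forall>b. fst (\<tau> (k,b)) < m \<and>
     (\<tau> (k,b) = (k, X k b) \<or> (fst (\<tau> (k,b)) = succm m k \<and> Pp k (snd (\<tau> (k,b))) = b))"
    by (auto simp: \<tau>_def succm_lt)
  ultimately show ?thesis by blast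
qed




lemma respond:
  assumes PG: "\<forall>q\<in>P. q \<subseteq> grid n \<and> card q = 2"
    and PD: "\<forall>q1\<in>P. \<forall>q2\<in>P. q1 \<noteq> q2 \<longrightarrow> q1 \<inter> q2 = {}"
    and PH: "\<forall>S. (\<forall>q\<in>P. q \<inter> S \<noteq> {}) \<longrightarrow> c0 \<in> S \<longrightarrow> has_transversal n S"
    and fr: "grid n - insert c0 {} - insert d {} \<noteq> {}"
  shows "maker_wins n (insert c0 {}) (insert d {})"
proof -
  define P' where "P' = (\<lambda>q. q - {d}) ` {q \<in> P. c0 \<notin> q}"
  show ?thesis
  proof (rule pairing[of P'])
    show "\<forall>q\<in>P'. q \<subseteq> grid n - insert c0 {} - insert d {} \<and> q \<noteq> {} \<and> card q \<le> 2"
    proof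
      fix q' assume "q' \<in> P'"
      then obtain q where q: "q \<in> P" "c0 \<notin> q" "q' = q - {d}" unfolding P'_def by blast
      have qg: "q \<subseteq> grid n" "card q = 2" using PG q(1) by blast+
      have "q' \<noteq> {}" using card2_minus[OF qg(2)] q(3) by simp
      moreover have "card q' \<le> 2" using qg(2) q(3) card_Diff1_le[of q d] by simp
      moreover have "q' \<subseteq> grid n - insert c0 {} - insert d {}" using qg(1) q(2,3) by auto
      ultimately show "q' \<subseteq> grid n - insert c0 {} - insert d {} \<and> q' \<noteq> {} \<and> card q' \<le> 2"
        by blast
    qed
    show "\<forall>q1\<in>P'. \<forall>q2\<in>P'. q1 \<noteq> q2 \<longrightarrow> q1 \<inter> q2 = {}"
    proof (intro ballI impI)
      fix q1' q2' assume a: "q1' \<in> P'" "q2' \<in> P'" "q1' \<noteq> q2'"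
      obtain q1 where q1: "q1 \<in> P" "q1' = q1 - {d}" using a unfolding P'_def by blast
      obtain q2 where q2: "q2 \<in> P" "q2' = q2 - {d}" using a unfolding P'_def by blast
      have "q1 \<noteq> q2" using a(3) q1(2) q2(2) by auto
      then have "q1 \<inter> q2 = {}" using PD q1(1) q2(1) by blast
      then show "q1' \<inter> q2' = {}" using q1(2) q2(2) by auto
    qed
    show "\<forall>q1\<in>P'. \<forall>q2\<in>P'. card q1 = 1 \<longrightarrow> card q2 = 1 \<longrightarrow> q1 = q2"
    proof (intro ballI impI)
      fix q1' q2' assume a: "q1' \<in> P'" "q2' \<in> P'" "card q1' = 1" "card q2' = 1"
      obtain q1 where q1: "q1 \<in> P" "q1' = q1 - {d}" using a unfolding P'_def by blast
      obtain q2 where q2: "q2 \<in> P" "q2' = q2 - {d}" using a unfolding P'_def by blast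
      have c1: "card q1 = 2" using PG q1(1) by blast
      have c2: "card q2 = 2" using PG q2(1) by blast
      have "card (q1 - {d}) = 1" using a(3) q1(2) by simp
      then have d1: "d \<in> q1" by (rule card2_single[OF c1])
      have "card (q2 - {d}) = 1" using a(4) q2(2) by simp
      then have d2: "d \<in> q2" by (rule card2_single[OF c2])
      have "q1 = q2"
      proof (rule ccontr)
        assume "q1 \<noteq> q2"
        then have "q1 \<inter> q2 = {}" using PD q1(1) q2(1) by blast
        then show False using d1 d2 by blast
      qed
      then show "q1' = q2'" using q1 q2 by simp
    qed
    show "\<forall>S. (\<forall>q\<in>P'. q \<inter> S \<noteq> {}) \<longrightarrow> has_transversal n (insert c0 {} \<union> S)"
    proof (intro allI impI)
      fix S assume h: "\<forall>q\<in>P'. q \<inter> S \<noteq> {}"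
      have "\<forall>q\<in>P. q \<inter> insert c0 S \<noteq> {}"
      proof
        fix q assume qP: "q \<in> P"
        show "q \<inter> insert c0 S \<noteq> {}"
        proof (cases "c0 \<in> q")
          case True then show ?thesis by auto
        next
          case False
          then have "q - {d} \<in> P'" unfolding P'_def using qP by blast
          then have "(q - {d}) \<inter> S \<noteq> {}" by (rule bspec[OF h])
          then show ?thesis by blast
        qed
      qed
      then have "has_transversal n (insert c0 S)" using PH by blast
      then show "has_transversal n (insert c0 {} \<union> S)" by simp
    qed
    show "grid n - insert c0 {} - insert d {} \<noteq> {}" by (rule fr)
  qed
qed

locale gr =
  fixes n :: nat
  assumes n4: "4 \<le> n"
begin

definition off where "off = n mod 2"
definition m where "m = n div 2"
definition enc :: "nat \<Rightarrow> bool \<Rightarrow> nat" where "enc k b = 2*k + of_bool b + 1 + off"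
definition E :: "nat \<times> bool \<Rightarrow> nat" where "E u = enc (fst u) (snd u)"

lemma m2: "2 \<le> m" using n4 unfolding m_def by auto
lemma nmo: "n = 2*m + off" unfolding m_def off_def by simp
lemma o01: "off = 0 \<or> off = 1" unfolding off_def by auto

lemma enc_inj: "enc k b = enc k' b' \<longleftrightarrow> k = k' \<and> b = b'"
  by (cases b; cases b'; auto simp: enc_def; presburger)

lemma enc_pos[simp]: "Suc 0 \<le> enc k b" "0 < enc k b" unfolding enc_def by auto

lemma E_inj: "inj E"
  by (rule injI) (auto simp: E_def enc_inj prod_eq_iff)

lemma enc_range: "k < m \<Longrightarrow> 1 + off \<le> enc k b \<and> enc k b \<le> n"
  using nmo unfolding enc_def by (cases b) auto

definition Dp where "Dp k b = {(enc k b, enc k False), (enc k b, enc k True)}"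
definition Op where "Op k c = {(enc k False, enc (succm m k) c), (enc k True, enc (succm m k) c)}"
definition P where "P = (\<lambda>(k,b). Dp k b) ` ({..<m} \<times> UNIV) \<union> (\<lambda>(k,c). Op k c) ` ({..<m} \<times> UNIV)"

lemma P_grid: "\<forall>q\<in>P. q \<subseteq> grid n \<and> card q = 2"
proof
  fix q assume "q \<in> P"
  then consider (D) k b where "k < m" "q = Dp k b" | (O) k c where "k < m" "q = Op k c"
    unfolding P_def by auto
  then show "q \<subseteq> grid n \<and> card q = 2"
  proof cases
    case D
    then show ?thesis using enc_range[OF D(1)] unfolding Dp_def grid_def
      by (auto simp: enc_inj)
  next
    case O
    have "succm m k < m" using succm_lt O(1) by blast
    then show ?thesis using enc_range[OF O(1)] enc_range[OF \<open>succm m k < m\<close>] O unfolding Op_def grid_def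
      by (auto simp: enc_inj)
  qed
qed

lemma P_disj: "\<forall>q1\<in>P. \<forall>q2\<in>P. q1 \<noteq> q2 \<longrightarrow> q1 \<inter> q2 = {}"
proof (intro ballI impI)
  fix q1 q2 assume q: "q1 \<in> P" "q2 \<in> P" "q1 \<noteq> q2"
  have sn: "succm m k \<noteq> k" if "k < m" for k using succm_neq[OF m2 that] .
  from q(1) consider (D) k b where "k < m" "q1 = Dp k b" | (O) k c where "k < m" "q1 = Op k c"
    unfolding P_def by auto
  then show "q1 \<inter> q2 = {}"
  proof cases
    case D
    from q(2) consider (D') k' b' where "k' < m" "q2 = Dp k' b'" | (O') k' c' where "k' < m" "q2 = Op k' c'"
      unfolding P_def by auto
    then show ?thesis
    proof cases
      case D' then show ?thesis using D q(3) unfolding Dp_def by (auto simp: enc_inj)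
    next
      case O' then show ?thesis using D sn[OF D(1)] unfolding Dp_def Op_def by (auto simp: enc_inj)
    qed
  next
    case O
    from q(2) consider (D') k' b' where "k' < m" "q2 = Dp k' b'" | (O') k' c' where "k' < m" "q2 = Op k' c'"
      unfolding P_def by auto
    then show ?thesis
    proof cases
      case D' then show ?thesis using O sn[OF D'(1)] unfolding Dp_def Op_def by (auto simp: enc_inj)
    next
      case O' then show ?thesis using O q(3) unfolding Op_def by (auto simp: enc_inj)
    qed
  qed
qed

lemma P_hit:
  assumes hit: "\<forall>q\<in>P. q \<inter> S \<noteq> {}" and s11: "(1,1) \<in> S"
  shows "has_transversal n S"
proof -
  define X where "X k b = ((enc k b, enc k True) \<in> S)" for k b
  define Pp where "Pp k c = ((enc k True, enc (succm m k) c) \<in> S)" for k c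
  have XS: "(enc k b, enc k (X k b)) \<in> S" if "k < m" for k b
  proof -
    have "Dp k b \<in> P" unfolding P_def using that by auto
    then have "Dp k b \<inter> S \<noteq> {}" using hit by blast
    then show ?thesis unfolding Dp_def X_def by (cases "(enc k b, enc k True) \<in> S") auto
  qed
  have PS: "(enc k (Pp k c), enc (succm m k) c) \<in> S" if "k < m" for k c
  proof -
    have "Op k c \<in> P" unfolding P_def using that by auto
    then have "Op k c \<inter> S \<noteq> {}" using hit by blast
    then show ?thesis unfolding Op_def Pp_def by (cases "(enc k True, enc (succm m k) c) \<in> S") auto
  qed
  obtain \<tau> where tinj: "inj_on \<tau> ({..<m} \<times> UNIV)" and
    tprop: "\<forall>k<m. \<forall>b. fst (\<tau> (k,b)) < m \<and>
     (\<tau> (k,b) = (k, X k b) \<or> (fst (\<tau> (k,b)) = succm m k \<and> Pp k (snd (\<tau> (k,b))) = b))"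
    using core[OF m2] by blast
  define U where "U = {..<m} \<times> (UNIV :: bool set)"
  define F where "F u = (E u, E (\<tau> u))" for u
  define Ex where "Ex = (if off = 1 then {(1::nat,1::nat)} else {})"
  define T where "T = Ex \<union> F ` U"
  have FS: "F u \<in> S" if uU: "u \<in> U" for u
  proof -
    obtain k b where u: "u = (k,b)" "k < m" using uU unfolding U_def by (cases u) auto
    from tprop u(2) have "\<tau> (k,b) = (k, X k b) \<or> (fst (\<tau> (k,b)) = succm m k \<and> Pp k (snd (\<tau> (k,b))) = b)" by blast
    then show ?thesis
    proof
      assume "\<tau> (k,b) = (k, X k b)"
      then show ?thesis using XS[OF u(2)] u unfolding F_def E_def by simp
    next
      assume a: "fst (\<tau> (k,b)) = succm m k \<and> Pp k (snd (\<tau> (k,b))) = b"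
      then show ?thesis using PS[OF u(2), of "snd (\<tau> (k,b))"] u unfolding F_def E_def by simp
    qed
  qed
  have tU: "\<tau> u \<in> U" if uU: "u \<in> U" for u
  proof -
    obtain k b where kb: "u = (k,b)" "k < m" using uU unfolding U_def by (cases u) auto
    then have "fst (\<tau> (k,b)) < m" using tprop by blast
    then show ?thesis unfolding U_def using kb by (cases "\<tau> (k,b)") auto
  qed
  have EU: "1 + off \<le> E u \<and> E u \<le> n" if "u \<in> U" for u
    using that enc_range unfolding U_def E_def by auto
  have Finj: "inj_on F U" using E_inj unfolding F_def by (auto intro!: inj_onI simp: inj_eq)
  have cardU: "card U = 2 * m" unfolding U_def by (simp add: card_cartesian_product)
  have disjEx: "Ex \<inter> F ` U = {}"
  proof -
    { fix u assume u: "u \<in> U" "F u \<in> Ex"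
      then have "off = 1" "E u = 1" unfolding Ex_def F_def by (auto split: if_splits)
      then have False using EU[OF u(1)] by simp }
    then show ?thesis by blast
  qed
  have "is_transversal n T"
    unfolding is_transversal_def
  proof (intro conjI)
    show "T \<subseteq> grid n"
    proof
      fix a assume "a \<in> T"
      then consider "a \<in> Ex" | u where "u \<in> U" "a = F u" unfolding T_def by auto
      then show "a \<in> grid n"
      proof cases
        case 1 then show ?thesis unfolding Ex_def grid_def using n4 by (auto split: if_splits)
      next
        case 2
        have "1 + off \<le> E u \<and> E u \<le> n" "1 + off \<le> E (\<tau> u) \<and> E (\<tau> u) \<le> n"
          using EU 2(1) tU by auto
        then show ?thesis unfolding grid_def F_def 2(2) by auto
      qed
    qed
    show "card T = n"
    proof -
      have "card (F ` U) = 2 * m" using card_image[OF Finj] cardU by simp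
      moreover have "card Ex = off" unfolding Ex_def using o01 by auto
      moreover have "finite (F ` U)" unfolding U_def by simp
      moreover have "finite Ex" unfolding Ex_def by simp
      ultimately show ?thesis unfolding T_def using card_Un_disjoint[OF _ _ disjEx] nmo by simp
    qed
    show "inj_on fst T"
    proof (rule inj_onI)
      fix a b assume ab: "a \<in> T" "b \<in> T" "fst a = fst b"
      show "a = b"
      proof (cases "a \<in> Ex"; cases "b \<in> Ex")
        assume "a \<in> Ex" "b \<in> Ex" then show ?thesis unfolding Ex_def by (auto split: if_splits)
      next
        assume "a \<in> Ex" "b \<notin> Ex"
        then obtain u where "u \<in> U" "b = F u" "off = 1" "a = (1,1)" using ab unfolding T_def Ex_def by (auto split: if_splits)
        then show ?thesis using EU[OF \<open>u \<in> U\<close>] ab(3) unfolding F_def by simp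
      next
        assume "a \<notin> Ex" "b \<in> Ex"
        then obtain u where "u \<in> U" "a = F u" "off = 1" "b = (1,1)" using ab unfolding T_def Ex_def by (auto split: if_splits)
        then show ?thesis using EU[OF \<open>u \<in> U\<close>] ab(3) unfolding F_def by simp
      next
        assume "a \<notin> Ex" "b \<notin> Ex"
        then obtain u v where uv: "u \<in> U" "v \<in> U" "a = F u" "b = F v" using ab unfolding T_def by auto
        then have "E u = E v" using ab(3) unfolding F_def by simp
        then have "u = v" using E_inj by (simp add: inj_eq)
        then show ?thesis using uv by simp
      qed
    qed
    show "inj_on snd T"
    proof (rule inj_onI)
      fix a b assume ab: "a \<in> T" "b \<in> T" "snd a = snd b"
      show "a = b"
      proof (cases "a \<in> Ex"; cases "b \<in> Ex")
        assume "a \<in> Ex" "b \<in> Ex" then show ?thesis unfolding Ex_def by (auto split: if_splits)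
      next
        assume "a \<in> Ex" "b \<notin> Ex"
        then obtain u where "u \<in> U" "b = F u" "off = 1" "a = (1,1)" using ab unfolding T_def Ex_def by (auto split: if_splits)
        then show ?thesis using EU[OF tU[OF \<open>u \<in> U\<close>]] ab(3) unfolding F_def by simp
      next
        assume "a \<notin> Ex" "b \<in> Ex"
        then obtain u where "u \<in> U" "a = F u" "off = 1" "b = (1,1)" using ab unfolding T_def Ex_def by (auto split: if_splits)
        then show ?thesis using EU[OF tU[OF \<open>u \<in> U\<close>]] ab(3) unfolding F_def by simp
      next
        assume "a \<notin> Ex" "b \<notin> Ex"
        then obtain u v where uv: "u \<in> U" "v \<in> U" "a = F u" "b = F v" using ab unfolding T_def by auto
        then have "E (\<tau> u) = E (\<tau> v)" using ab(3) unfolding F_def by simp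
        then have "\<tau> u = \<tau> v" using E_inj by (simp add: inj_eq)
        then have "u = v" using tinj uv unfolding U_def by (meson inj_onD)
        then show ?thesis using uv by simp
      qed
    qed
  qed
  moreover have "T \<subseteq> S" unfolding T_def Ex_def using FS s11 by auto
  ultimately show ?thesis unfolding has_transversal_def by blast
qed

end


theorem mainTheorem3:
  fixes n :: nat
  assumes "n \<ge> 4"
  shows "maker_wins n {} {} \<and> maker_wins_with_move n {} {} (1, 1)"
proof -
  interpret gr n using assms by unfold_locales
  have g11: "(1,1) \<in> grid n" using assms unfolding grid_def by simp
  have g12: "(1,2) \<in> grid n" "(1,3) \<in> grid n" using assms unfolding grid_def by simp_all
  have ne: "grid n - insert (1,1) {} - {} \<noteq> {}"
  proof -
    have "(1::nat,2::nat) \<noteq> (1,1)" by simp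
    then have "(1::nat,2::nat) \<in> grid n - insert (1,1) {} - {}" using g12(1) by (simp only: Diff_iff insert_iff empty_iff) simp
    then show ?thesis by (metis empty_iff)
  qed
  have PH: "\<forall>S. (\<forall>q\<in>P. q \<inter> S \<noteq> {}) \<longrightarrow> (1,1) \<in> S \<longrightarrow> has_transversal n S"
  proof (intro allI impI)
    fix S assume "\<forall>q\<in>P. q \<inter> S \<noteq> {}" "(1::nat,1::nat) \<in> S"
    then show "has_transversal n S" by (rule P_hit)
  qed
  have resp: "\<forall>d \<in> grid n - insert (1,1) {} - {}. maker_wins n (insert (1,1) {}) (insert d {})"
  proof
    fix d assume d: "d \<in> grid n - insert (1,1) {} - {}"
    have fr: "grid n - insert (1,1) {} - insert d {} \<noteq> {}"
    proof (cases "d = (1,2)")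
      case True
      have "(1::nat,3::nat) \<noteq> (1,1)" "(1::nat,3::nat) \<noteq> (1,2)" by simp_all
      then have "(1::nat,3::nat) \<in> grid n - insert (1,1) {} - insert d {}" using g12(2) True
        by (simp only: Diff_iff insert_iff empty_iff) simp
      then show ?thesis by (metis empty_iff)
    next
      case False
      have "(1::nat,2::nat) \<noteq> (1,1)" by simp
      then have "(1::nat,2::nat) \<in> grid n - insert (1,1) {} - insert d {}" using g12(1) False
        by (simp only: Diff_iff insert_iff empty_iff) auto
      then show ?thesis by (metis empty_iff)
    qed
    show "maker_wins n (insert (1,1) {}) (insert d {})"
      by (rule respond[OF P_grid P_disj PH fr])
  qed
  have mwm: "maker_wins_with_move n {} {} (1,1)"
    unfolding maker_wins_with_move_def
  proof (intro conjI disjI2)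
    show "(1,1) \<in> grid n - {} - {}" using g11 by simp
    show "grid n - insert (1,1) {} - {} \<noteq> {}" by (rule ne)
    show "\<forall>d\<in>grid n - insert (1,1) {} - {}. maker_wins n (insert (1,1) {}) (insert d {})" by (rule resp)
  qed
  moreover have "maker_wins n {} {}"
  proof (rule maker_wins.win_later)
    show "(1,1) \<in> grid n - {} - {}" using g11 by simp
    show "grid n - insert (1,1) {} - {} \<noteq> {}" by (rule ne)
    show "\<forall>d\<in>grid n - insert (1,1) {} - {}. maker_wins n (insert (1,1) {}) (insert d {})" by (rule resp)
  qed
  ultimately show ?thesis by blast
qed

end
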